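(* Let $w=a_1\cdots a_n$ be a word over $\{a,b\}$ with $a_1\neq a_n$. If deleting some $k$ letters from $w$ yields an antipalindrome, then one can obtain an antipalindrome by deleting some $l\le k$ letters from $w$ in such a way that the letters $a_1$ and $a_n$ are not deleted.
   Context: A word is a finite word over the two-letter alphabet $\{a,b\}$. A word $w=a_1\cdots a_n$ is an antipalindrome if $a_i\neq a_{n-i+1}$ for all $i\le n$. *)

theory Defs
  imports Main
begin

datatype letter = A | B

definition antipalindrome :: "letter list \<Rightarrow> bool" where
  "antipalindrome v \<longleftrightarrow> (\<forall>i < length v. v ! i \<noteq> v ! (length v - 1 - i))"

definition delete_positions :: "letter list \<Rightarrow> nat set \<Rightarrow> letter list" where
  "delete_positions w D = nths w ({0..<length w} - D)"

end

theory Submission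
  imports Defs
begin

lemma nths_cong_len: "(\<And>i. i < length xs \<Longrightarrow> i \<in> P \<longleftrightarrow> i \<in> Q) \<Longrightarrow> nths xs P = nths xs Q"
proof (induction xs arbitrary: P Q)
  case Nil then show ?case by simp
next
  case (Cons a xs)
  have "nths xs {j. Suc j \<in> P} = nths xs {j. Suc j \<in> Q}"
    by (rule Cons.IH) (use Cons.prems in auto)
  moreover have "0 \<in> P \<longleftrightarrow> 0 \<in> Q" using Cons.prems by auto
  ultimately show ?case by (simp add: nths_Cons)
qed

lemma nths_split:
  "j \<in> S \<Longrightarrow> j < length u \<Longrightarrow>
   nths u S = nths u {i\<in>S. i<j} @ [u!j] @ nths u {i\<in>S. j<i}"
proof (induction u arbitrary: S j)
  case Nil then show ?case by simp
next
  case (Cons a u)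
  show ?case
  proof (cases j)
    case 0
    have "{i\<in>S. i<j} = {}" using 0 by auto
    moreover have "nths u {i. Suc i \<in> S} = nths u {i. Suc i \<in> {i \<in> S. j < i}}"
      using 0 by (intro nths_cong_len) auto
    ultimately show ?thesis using 0 Cons.prems by (simp add: nths_Cons)
  next
    case (Suc j')
    have "nths u {i. Suc i \<in> S} = nths u {i\<in>{i. Suc i \<in> S}. i<j'} @ [u!j'] @ nths u {i\<in>{i. Suc i \<in> S}. j'<i}"
      using Cons.prems Suc by (intro Cons.IH) auto
    moreover have "{i\<in>{i. Suc i \<in> S}. i<j'} = {i. Suc i \<in> {i \<in> S. i < j}}" using Suc by auto
    moreover have "{i\<in>{i. Suc i \<in> S}. j'<i} = {i. Suc i \<in> {i \<in> S. j < i}}" using Suc by auto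
    moreover have "0 \<in> S \<longleftrightarrow> 0 \<in> {i \<in> S. i < j}" using Suc by auto
    moreover have "0 \<notin> {i \<in> S. j < i}" by auto
    ultimately show ?thesis using Suc by (simp add: nths_Cons)
  qed
qed

lemma dp_decomp:
  "delete_positions (x # u @ [y]) E =
    (if 0 \<notin> E then [x] else []) @ nths u {j. j < length u \<and> Suc j \<notin> E}
    @ (if Suc (length u) \<notin> E then [y] else [])"
proof -
  have "nths u {j. Suc j \<in> {0..<length (x # u @ [y])} - E} = nths u {j. j < length u \<and> Suc j \<notin> E}"
    by (intro nths_cong_len) auto
  then show ?thesis
    unfolding delete_positions_def by (simp add: nths_Cons nths_append)
qed

lemma anti_wrap:
  assumes "x \<noteq> y" "antipalindrome v"
  shows "antipalindrome (x # v @ [y])"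
  unfolding antipalindrome_def
proof (intro allI impI)
  fix i assume i: "i < length (x # v @ [y])"
  let ?m = "length v"
  show "(x # v @ [y]) ! i \<noteq> (x # v @ [y]) ! (length (x # v @ [y]) - 1 - i)"
  proof (cases "i = 0")
    case True then show ?thesis using assms by (simp add: nth_append)
  next
    case False
    show ?thesis
    proof (cases "i = Suc ?m")
      case True then show ?thesis using assms by (simp add: nth_append)
    next
      case F2: False
      obtain i' where i': "i = Suc i'" "i' < ?m" using False F2 i
        by (cases i) auto
      have "v ! i' \<noteq> v ! (?m - 1 - i')" using assms(2) i'(2) unfolding antipalindrome_def by blast
      moreover have "length (x # v @ [y]) - 1 - i = Suc (?m - 1 - i')" using i' by simp
      moreover have "?m - 1 - i' < ?m" using i' by simp
      ultimately show ?thesis using i' by (simp add: nth_append)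
    qed
  qed
qed

lemma anti_cons: "antipalindrome (x # r) \<Longrightarrow> r \<noteq> [] \<and> last r \<noteq> x"
  unfolding antipalindrome_def
  apply (drule spec[of _ 0])
  apply (cases r rule: rev_cases)
   apply (auto simp: nth_append)
  done

lemma anti_snoc: "antipalindrome (r @ [y]) \<Longrightarrow> r \<noteq> [] \<and> hd r \<noteq> y"
  unfolding antipalindrome_def
  apply (drule spec[of _ 0])
  apply (cases r)
   apply (auto simp: nth_append)
  done

lemma letter3: "(a::letter) \<noteq> x \<Longrightarrow> x \<noteq> y \<Longrightarrow> a = y"
  by (cases a; cases x; cases y) auto

theorem lemma3:
  fixes w :: "letter list" and D :: "nat set" and k :: nat
  assumes "w \<noteq> []"
    and "hd w \<noteq> last w"
    and "D \<subseteq> {0..<length w}"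
    and "card D = k"
    and "antipalindrome (delete_positions w D)"
  shows "\<exists>E l. E \<subseteq> {0..<length w} \<and> card E = l \<and> l \<le> k
           \<and> 0 \<notin> E \<and> length w - 1 \<notin> E
           \<and> antipalindrome (delete_positions w E)"
proof -
  obtain x w' where w: "w = x # w'" using assms(1) by (cases w) auto
  have "w' \<noteq> []" using assms(2) w by auto
  then obtain u y where w': "w' = u @ [y]" by (cases w' rule: rev_cases) auto
  have xy: "x \<noteq> y" using assms(2) w w' by simp
  have len: "length w - 1 = Suc (length u)" using w w' by simp
  have finD: "finite D" using assms(3) finite_subset by blast
  define S where "S = {j. j < length u \<and> Suc j \<notin> D}"
  have finS: "finite S" unfolding S_def by simp
  have dpD: "delete_positions w D = (if 0 \<notin> D then [x] else []) @ nths u S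
    @ (if Suc (length u) \<notin> D then [y] else [])"
    unfolding w w' S_def by (rule dp_decomp)
  have goal: "\<exists>E l. E \<subseteq> {0..<length w} \<and> card E = l \<and> l \<le> k
           \<and> 0 \<notin> E \<and> length w - 1 \<notin> E
           \<and> antipalindrome (delete_positions w E)"
    if "E \<subseteq> {0..<length w}" "card E \<le> k" "0 \<notin> E" "length w - 1 \<notin> E"
       "antipalindrome (delete_positions w E)" for E
    using that by blast
  consider "0 \<notin> D" "Suc (length u) \<notin> D" | "0 \<in> D" "Suc (length u) \<in> D"
    | "0 \<notin> D" "Suc (length u) \<in> D" | "0 \<in> D" "Suc (length u) \<notin> D" by blast
  then show ?thesis
  proof cases
    case 1 then show ?thesis using assms len by (intro goal[of D]) auto
  next
    case 2
    define E where "E = D - {0, Suc (length u)}"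
    have "card E \<le> card D" unfolding E_def using finD by (intro card_mono) auto
    moreover have "{j. j < length u \<and> Suc j \<notin> E} = S" unfolding E_def S_def by auto
    then have "delete_positions w E = x # nths u S @ [y]"
      unfolding w w' dp_decomp by (auto simp: E_def)
    moreover have "antipalindrome (nths u S)" using assms(5) dpD 2 by simp
    ultimately have "antipalindrome (delete_positions w E)" "card E \<le> k"
      using anti_wrap xy assms(4) by auto
    moreover have "E \<subseteq> {0..<length w}" "0 \<notin> E" "length w - 1 \<notin> E"
      using assms(3) len unfolding E_def by auto
    ultimately show ?thesis by (intro goal[of E])
  next
    case 3
    then have "Suc (length u) \<in> D \<or> 0 \<in> D" by blast
    have "antipalindrome (x # nths u S)" using assms(5) dpD 3 by simp
    from anti_cons[OF this] have ne: "nths u S \<noteq> []" and la: "last (nths u S) = y"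
      using letter3 xy by auto
    have "S \<noteq> {}" using ne by auto
    define j where "j = Max S"
    have jS: "j \<in> S" unfolding j_def using finS \<open>S \<noteq> {}\<close> by simp
    have jl: "j < length u" using jS S_def by simp
    have gt: "{i\<in>S. j<i} = {}" unfolding j_def using finS by (auto dest: Max_ge[OF finS] simp: not_less)
    have lt: "{i\<in>S. i<j} = S - {j}" unfolding j_def using finS by (auto dest: Max_ge[OF finS] simp: order.order_iff_strict)
    have sp: "nths u S = nths u (S - {j}) @ [u!j]"
      using nths_split[OF jS jl] gt lt by simp
    have uj: "u!j = y" using sp la by (metis last_snoc)
    define E where "E = insert (Suc j) (D - {Suc (length u)})"
    have jD: "Suc j \<notin> D" using jS S_def by simp
    have "card D > 0" using finD card_gt_0_iff \<open>Suc (length u) \<in> D \<or> 0 \<in> D\<close> by blast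
    have "card E = card D" using \<open>card D > 0\<close> unfolding E_def using finD 3 jD jl
      by (simp add: card_Diff_singleton)
    moreover have "{i. i < length u \<and> Suc i \<notin> E} = S - {j}"
      unfolding E_def S_def by auto
    then have "delete_positions w E = x # nths u (S - {j}) @ [y]"
      unfolding w w' dp_decomp using 3 jl by (auto simp: E_def)
    then have "delete_positions w E = x # nths u S" using sp uj by simp
    ultimately show ?thesis using assms len 3 jl \<open>antipalindrome (x # nths u S)\<close>
      by (intro goal[of E]) (auto simp: E_def w w')
  next
    case 4
    then have "Suc (length u) \<in> D \<or> 0 \<in> D" by blast
    have "antipalindrome (nths u S @ [y])" using assms(5) dpD 4 by simp
    from anti_snoc[OF this] have ne: "nths u S \<noteq> []" and hx: "hd (nths u S) = x"
      using letter3 xy by auto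
    have "S \<noteq> {}" using ne by auto
    define j where "j = Min S"
    have jS: "j \<in> S" unfolding j_def using finS \<open>S \<noteq> {}\<close> by simp
    have jl: "j < length u" using jS S_def by simp
    have lt: "{i\<in>S. i<j} = {}" unfolding j_def using finS by (auto dest: Min_le[OF finS] simp: not_less)
    have gt: "{i\<in>S. j<i} = S - {j}" unfolding j_def using finS by (auto dest: Min_le[OF finS] simp: order.order_iff_strict)
    have sp: "nths u S = u!j # nths u (S - {j})"
      using nths_split[OF jS jl] gt lt by simp
    have uj: "u!j = x" using sp hx by simp
    define E where "E = insert (Suc j) (D - {0})"
    have jD: "Suc j \<notin> D" using jS S_def by simp
    have "card D > 0" using finD card_gt_0_iff \<open>Suc (length u) \<in> D \<or> 0 \<in> D\<close> by blast
    have "card E = card D" using \<open>card D > 0\<close> unfolding E_def using finD 4 jD jl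
      by (simp add: card_Diff_singleton)
    moreover have "{i. i < length u \<and> Suc i \<notin> E} = S - {j}"
      unfolding E_def S_def by auto
    then have "delete_positions w E = x # nths u (S - {j}) @ [y]"
      unfolding w w' dp_decomp using 4 jl by (auto simp: E_def)
    then have "delete_positions w E = nths u S @ [y]" using sp uj by simp
    ultimately show ?thesis using assms len 4 jl \<open>antipalindrome (nths u S @ [y])\<close>
      by (intro goal[of E]) (auto simp: E_def w w')
  qed
qed

end
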